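(* Fix a constant $\lambda\ge0$ and $R>0$, and suppose $\Gamma\cap\mathcal O$ is the straight segment $\{(x,0):-R<x<R\}$, where $\mathcal O$ is the open disc of radius $R$ centered at the origin, with $\boldsymbol n=(0,1)^T$ or $\boldsymbol n=(0,-1)^T$ its unit normal. Let the collocation points be $\boldsymbol q^{(1)}_k=(\eta^{(1)}_kR,0)$, $k=1,2,3$, with $\eta^{(1)}_k$ distinct; $\boldsymbol q^{(2)}_k=(\eta^{(2)}_kR,0)$, $k=1,2$, with $\eta^{(2)}_1\ne\eta^{(2)}_2$; $\boldsymbol q^{(3)}=(\eta^{(3)}R,0)$; and $\boldsymbol q^{(4)}_k=R\boldsymbol\xi_k$, $k=1,2,3$, where $\boldsymbol\xi_1,\boldsymbol\xi_2,\boldsymbol\xi_3$ are non-collinear points; all constants $\eta^{(d)}_k,\boldsymbol\xi_k$ are independent of $R$ and all points lie in $\mathcal O$. Then the $15\times15$ collocation matrix $\boldsymbol M$ defined in the context is independent of $R$ and invertible.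
   Context: Let $\phi_1=1,\phi_2=x,\phi_3=y,\phi_4=x^2,\phi_5=y^2,\phi_6=xy$. Unknowns are $\boldsymbol c_1,\dots,\boldsymbol c_6\in\mathbb R^2$ (components $c_j^{(1)},c_j^{(2)}$) and $d_1,d_2,d_3\in\mathbb R$, i.e. a vector in $\mathbb R^{15}$, representing $\hat{\boldsymbol v}(\boldsymbol x)=\sum_{j=1}^6\boldsymbol c_j\phi_j(\boldsymbol x/R)$, $\hat q(\boldsymbol x)=\sum_{j=1}^3\frac{d_j}{R}\phi_j(\boldsymbol x/R)$. The matrix $\boldsymbol M$ is the matrix of the linear map sending the unknowns to the 15 quantities: (i) for $k=1,2,3$: $\sum_{j=1}^6\phi_j(\boldsymbol q^{(1)}_k/R)\boldsymbol c_j\in\mathbb R^2$; (ii) for $k=1,2$: $\sum_{j=1}^6\big(\boldsymbol c_j\nabla\phi_j^T+\nabla\phi_j\boldsymbol c_j^T\big)(\boldsymbol q^{(2)}_k/R)\,\boldsymbol n(\boldsymbol q^{(2)}_k)-\sum_{j=1}^3d_j\phi_j(\boldsymbol q^{(2)}_k/R)\boldsymbol n(\boldsymbol q^{(2)}_k)\in\mathbb R^2$; (iii) $\sum_{j=1}^6\big((\Delta-\lambda)\phi_j\big)(\boldsymbol q^{(3)}/R)\,\boldsymbol c_j-\sum_{j=1}^3\nabla\phi_j(\boldsymbol q^{(3)}/R)\,d_j\in\mathbb R^2$; (iv) for $k=1,2,3$: $\sum_{j=1}^6\big(\partial_x\phi_j\,c_j^{(1)}+\partial_y\phi_j\,c_j^{(2)}\big)(\boldsymbol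 q^{(4)}_k/R)\in\mathbb R$ (with any fixed ordering of rows and columns). These encode collocation of the Dirichlet condition, the traction (Neumann) condition, the Brinkman momentum equation $\Delta\hat{\boldsymbol v}-\lambda\hat{\boldsymbol v}-\nabla\hat q$, and the divergence-free condition, after scaling by powers of $R$. *)

theory Defs
  imports "HOL-Analysis.Analysis"
begin

definition phi :: "nat \<Rightarrow> real^2 \<Rightarrow> real" where
  "phi j p = (let x = p$1; y = p$2 in
     (if j = 1 then 1 else if j = 2 then x else if j = 3 then y
      else if j = 4 then x^2 else if j = 5 then y^2 else if j = 6 then x*y else 0))"

definition dphix :: "nat \<Rightarrow> real^2 \<Rightarrow> real" where
  "dphix j p = (let x = p$1; y = p$2 in
     (if j = 2 then 1 else if j = 4 then 2*x else if j = 6 then y else 0))"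

definition dphiy :: "nat \<Rightarrow> real^2 \<Rightarrow> real" where
  "dphiy j p = (let x = p$1; y = p$2 in
     (if j = 3 then 1 else if j = 5 then 2*y else if j = 6 then x else 0))"

definition dphi :: "nat \<Rightarrow> nat \<Rightarrow> real^2 \<Rightarrow> real" where
  "dphi i j p = (if i = 1 then dphix j p else dphiy j p)"

definition lapphi :: "nat \<Rightarrow> real^2 \<Rightarrow> real" where
  "lapphi j p = (if j = 4 \<or> j = 5 then 2 else 0)"

definition idx :: "nat \<Rightarrow> 15" where "idx k = of_nat k"

text \<open>Unknown ordering: c_j^(i) is coordinate 2(j-1)+(i-1) (j=1..6, i=1..2),
  d_j is coordinate 12+(j-1) (j=1..3).\<close>
definition cc :: "real^15 \<Rightarrow> nat \<Rightarrow> nat \<Rightarrow> real" where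
  "cc u j i = u $ idx (2*(j-1) + (i-1))"

definition dd :: "real^15 \<Rightarrow> nat \<Rightarrow> real" where
  "dd u j = u $ idx (12 + (j-1))"

definition comp :: "real^2 \<Rightarrow> nat \<Rightarrow> real" where
  "comp v i = (if i = 1 then v$1 else v$2)"

definition collocmap ::
  "real \<Rightarrow> real \<Rightarrow> (real^2 \<Rightarrow> real^2) \<Rightarrow> (nat \<Rightarrow> real^2) \<Rightarrow> (nat \<Rightarrow> real^2)
   \<Rightarrow> real^2 \<Rightarrow> (nat \<Rightarrow> real^2) \<Rightarrow> real^15 \<Rightarrow> real^15" where
  "collocmap R lam n q1 q2 q3 q4 u = (\<chi> r.
     let s = (\<lambda>p. (1/R) *\<^sub>R p) in
     (if \<exists>k\<in>{1..3}. \<exists>i\<in>{1..2}. r = idx (2*(k-1)+(i-1)) then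
        (let (k,i) = (SOME (k,i). k\<in>{1..3} \<and> i\<in>{1..2} \<and> r = idx (2*(k-1)+(i-1))) in
          \<Sum>j=1..6. phi j (s (q1 k)) * cc u j i)
      else if \<exists>k\<in>{1..2}. \<exists>i\<in>{1..2}. r = idx (6 + 2*(k-1)+(i-1)) then
        (let (k,i) = (SOME (k,i). k\<in>{1..2} \<and> i\<in>{1..2} \<and> r = idx (6 + 2*(k-1)+(i-1))) in
          (\<Sum>j=1..6. \<Sum>l=1..2.
              (cc u j i * dphi l j (s (q2 k)) + dphi i j (s (q2 k)) * cc u j l)
                * comp (n (q2 k)) l)
          - (\<Sum>j=1..3. dd u j * phi j (s (q2 k)) * comp (n (q2 k)) i))
      else if \<exists>i\<in>{1..2}. r = idx (10 + (i-1)) then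
        (let i = (SOME i. i\<in>{1..2} \<and> r = idx (10 + (i-1))) in
          (\<Sum>j=1..6. (lapphi j (s q3) - lam * phi j (s q3)) * cc u j i)
          - (\<Sum>j=1..3. dphi i j (s q3) * dd u j))
      else
        (let k = (SOME k. k\<in>{1..3} \<and> r = idx (12 + (k-1))) in
          \<Sum>j=1..6. dphix j (s (q4 k)) * cc u j 1 + dphiy j (s (q4 k)) * cc u j 2)))"

definition collocM ::
  "real \<Rightarrow> real \<Rightarrow> (real^2 \<Rightarrow> real^2) \<Rightarrow> (nat \<Rightarrow> real^2) \<Rightarrow> (nat \<Rightarrow> real^2)
   \<Rightarrow> real^2 \<Rightarrow> (nat \<Rightarrow> real^2) \<Rightarrow> real^15^15" where
  "collocM R lam n q1 q2 q3 q4 = matrix (collocmap R lam n q1 q2 q3 q4)"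

end

theory Submission
  imports Defs
begin


lemma idx_eq: assumes "a < 15" "b < 15" shows "(idx a = idx b) = (a = b)"
proof
  assume h: "idx a = idx b"
  have "\<And>a b. a < 15 \<Longrightarrow> b < 15 \<Longrightarrow> b \<le> a \<Longrightarrow> (of_nat a :: 15) = of_nat b \<Longrightarrow> a = b"
  proof -
    fix a b :: nat assume "a < 15" "b < 15" "b \<le> a" "(of_nat a :: 15) = of_nat b"
    then have "(of_nat (a - b) :: 15) = 0" by (simp add: of_nat_diff)
    then have "CHAR(15) dvd (a - b)" by (simp only: of_nat_eq_0_iff_char_dvd)
    then have "15 dvd (a - b)" by simp
    then show "a = b" using \<open>a < 15\<close> \<open>b \<le> a\<close>
      by (metis diff_is_0_eq' dvd_imp_le le_antisym less_imp_diff_less not_less zero_less_diff)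
  qed
  then show "a = b" using h assms unfolding idx_def by (metis nat_le_linear)
qed simp





lemma row1:
  assumes "k \<in> {1..3}" "i \<in> {1..2}"
  shows "collocmap R lam n q1 q2 q3 q4 u $ idx (2*(k-1)+(i-1))
     = (\<Sum>j=1..6. phi j ((1/R) *\<^sub>R q1 k) * cc u j i)"
proof -
  have c: "\<exists>k'\<in>{1..3}. \<exists>i'\<in>{1..2}. idx (2*(k-1)+(i-1)) = idx (2*(k'-1)+(i'-1))"
    using assms by blast
  have s: "(SOME (k',i'). k'\<in>{1..3} \<and> i'\<in>{1..2} \<and> idx (2*(k-1)+(i-1)) = idx (2*(k'-1)+(i'-1))) = (k,i)"
  proof (rule some_equality)
    fix p assume "case p of (k',i') \<Rightarrow> k'\<in>{1..3} \<and> i'\<in>{1..2} \<and> idx (2*(k-1)+(i-1)) = idx (2*(k'-1)+(i'-1))"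
    then show "p = (k,i)" using assms by (cases p) (clarsimp simp: idx_eq, simp add: le_Suc_eq numeral_eq_Suc, elim disjE, auto)
  qed (use assms in auto)
  show ?thesis unfolding collocmap_def vec_lambda_beta Let_def by (simp only: if_P[OF c] s prod.case)
qed

lemma row2:
  assumes "k \<in> {1..2}" "i \<in> {1..2}"
  shows "collocmap R lam n q1 q2 q3 q4 u $ idx (6 + 2*(k-1)+(i-1))
     = (\<Sum>j=1..6. \<Sum>l=1..2.
              (cc u j i * dphi l j ((1/R) *\<^sub>R (q2 k)) + dphi i j ((1/R) *\<^sub>R (q2 k)) * cc u j l)
                * comp (n (q2 k)) l)
          - (\<Sum>j=1..3. dd u j * phi j ((1/R) *\<^sub>R (q2 k)) * comp (n (q2 k)) i)"
proof -
  have n1: "\<not> (\<exists>k'\<in>{1..3}. \<exists>i'\<in>{1..2}. idx (6 + 2*(k-1)+(i-1)) = idx (2*(k'-1)+(i'-1)))"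
    using assms by (auto simp: idx_eq)
  have c: "\<exists>k'\<in>{1..2}. \<exists>i'\<in>{1..2}. idx (6 + 2*(k-1)+(i-1)) = idx (6 + 2*(k'-1)+(i'-1))"
    using assms by blast
  have s: "(SOME (k',i'). k'\<in>{1..2} \<and> i'\<in>{1..2} \<and> idx (6 + 2*(k-1)+(i-1)) = idx (6 + 2*(k'-1)+(i'-1))) = (k,i)"
  proof (rule some_equality)
    fix p assume "case p of (k',i') \<Rightarrow> k'\<in>{1..2} \<and> i'\<in>{1..2} \<and> idx (6 + 2*(k-1)+(i-1)) = idx (6 + 2*(k'-1)+(i'-1))"
    then show "p = (k,i)" using assms by (cases p) (clarsimp simp: idx_eq, simp add: le_Suc_eq numeral_eq_Suc, elim disjE, auto)
  qed (use assms in auto)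
  show ?thesis unfolding collocmap_def vec_lambda_beta Let_def by (simp only: if_not_P[OF n1] if_P[OF c] s prod.case)
qed

lemma row3:
  assumes "i \<in> {1..2}"
  shows "collocmap R lam n q1 q2 q3 q4 u $ idx (10 + (i-1))
     = (\<Sum>j=1..6. (lapphi j ((1/R) *\<^sub>R q3) - lam * phi j ((1/R) *\<^sub>R q3)) * cc u j i)
          - (\<Sum>j=1..3. dphi i j ((1/R) *\<^sub>R q3) * dd u j)"
proof -
  have n1: "\<not> (\<exists>k'\<in>{1..3}. \<exists>i'\<in>{1..2}. idx (10 + (i-1)) = idx (2*(k'-1)+(i'-1)))"
    using assms by (auto simp: idx_eq)
  have n2: "\<not> (\<exists>k'\<in>{1..2}. \<exists>i'\<in>{1..2}. idx (10 + (i-1)) = idx (6 + 2*(k'-1)+(i'-1)))"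
    using assms by (auto simp: idx_eq)
  have c: "\<exists>i'\<in>{1..2}. idx (10 + (i-1)) = idx (10 + (i'-1))"
    using assms by blast
  have s: "(SOME i'. i'\<in>{1..2} \<and> idx (10 + (i-1)) = idx (10 + (i'-1))) = i"
  proof (rule some_equality)
    fix p assume "p\<in>{1..2} \<and> idx (10 + (i-1)) = idx (10 + (p-1))"
    then show "p = i" using assms by (auto simp: idx_eq)
  qed (use assms in auto)
  show ?thesis unfolding collocmap_def vec_lambda_beta Let_def by (simp only: if_not_P[OF n1] if_not_P[OF n2] if_P[OF c] s)
qed

lemma row4:
  assumes "k \<in> {1..3}"
  shows "collocmap R lam n q1 q2 q3 q4 u $ idx (12 + (k-1))
     = (\<Sum>j=1..6. dphix j ((1/R) *\<^sub>R q4 k) * cc u j 1 + dphiy j ((1/R) *\<^sub>R q4 k) * cc u j 2)"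
proof -
  have n1: "\<not> (\<exists>k'\<in>{1..3}. \<exists>i'\<in>{1..2}. idx (12 + (k-1)) = idx (2*(k'-1)+(i'-1)))"
    using assms by (auto simp: idx_eq)
  have n2: "\<not> (\<exists>k'\<in>{1..2}. \<exists>i'\<in>{1..2}. idx (12 + (k-1)) = idx (6 + 2*(k'-1)+(i'-1)))"
    using assms by (auto simp: idx_eq)
  have n3: "\<not> (\<exists>i'\<in>{1..2}. idx (12 + (k-1)) = idx (10 + (i'-1)))"
    using assms by (auto simp: idx_eq)
  have s: "(SOME k'. k'\<in>{1..3} \<and> idx (12 + (k-1)) = idx (12 + (k'-1))) = k"
  proof (rule some_equality)
    fix p assume "p\<in>{1..3} \<and> idx (12 + (k-1)) = idx (12 + (p-1))"
    then show "p = k" using assms by (auto simp: idx_eq)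
  qed (use assms in auto)
  show ?thesis unfolding collocmap_def vec_lambda_beta Let_def by (simp only: if_not_P[OF n1] if_not_P[OF n2] if_not_P[OF n3] s)
qed



lemma s6: "sum f {1..6::nat} = f 1 + f 2 + f 3 + f 4 + f 5 + f 6"
proof -
  have "{1..6::nat} = {1,2,3,4,5,6}" by auto
  then show ?thesis by (simp add: algebra_simps)
qed
lemma s3: "sum f {1..3::nat} = f 1 + f 2 + f 3"
proof -
  have "{1..3::nat} = {1,2,3}" by auto
  then show ?thesis by (simp add: algebra_simps)
qed
lemma s2: "sum f {1..2::nat} = f 1 + f 2"
proof -
  have "{1..2::nat} = {1,2}" by auto
  then show ?thesis by (simp add: algebra_simps)
qed

lemma scl: "R \<noteq> 0 \<Longrightarrow> (1/R) *\<^sub>R (vector [a*R, 0] :: real^2) = vector [a, 0]"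
  by (simp add: vec_eq_iff forall_2)

lemma vdm:
  fixes a b c t1 t2 t3 :: real
  assumes "t1 \<noteq> t2" "t1 \<noteq> t3" "t2 \<noteq> t3"
    and "a + t1 * b + t1^2 * c = 0" "a + t2 * b + t2^2 * c = 0" "a + t3 * b + t3^2 * c = 0"
  shows "a = 0 \<and> b = 0 \<and> c = 0"
proof -
  have "(t1 - t2) * (b + (t1 + t2) * c) = 0" using assms(4,5) by (simp add: algebra_simps power2_eq_square)
  then have 1: "b + (t1 + t2) * c = 0" using assms(1) by simp
  have "(t1 - t3) * (b + (t1 + t3) * c) = 0" using assms(4,6) by (simp add: algebra_simps power2_eq_square)
  then have 2: "b + (t1 + t3) * c = 0" using assms(2) by simp
  have "(t2 - t3) * c = (b + (t1 + t2) * c) - (b + (t1 + t3) * c)" by (simp add: algebra_simps)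
  also have "\<dots> = 0" using 1 2 by simp
  finally have "(t2 - t3) * c = 0" .
  then have c: "c = 0" using assms(3) by simp
  then have "b = 0" using 1 by simp
  then show ?thesis using c assms(4) by simp
qed

lemma lin2:
  fixes a b t1 t2 :: real
  assumes "t1 \<noteq> t2" "a + t1 * b = 0" "a + t2 * b = 0"
  shows "a = 0 \<and> b = 0"
proof -
  have "(t1 - t2) * b = (a + t1 * b) - (a + t2 * b)" by (simp add: algebra_simps)
  also have "\<dots> = 0" using assms by simp
  finally have "(t1 - t2) * b = 0" .
  then have "b = 0" using assms(1) by simp
  then show ?thesis using assms by simp
qed

lemma pl3:
  fixes a b c :: real and p :: "nat \<Rightarrow> real^2"
  assumes nc: "\<not> collinear {p 1, p 2, p 3}"
    and h: "\<And>k. k \<in> {1,2,3} \<Longrightarrow> a + b * p k $ 1 + c * p k $ 2 = 0"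
  shows "a = 0 \<and> b = 0 \<and> c = 0"
proof (cases "b = 0 \<and> c = 0")
  case True
  then show ?thesis using h[of 1] by simp
next
  case False
  have "collinear {p 1, p 2, p 3}"
    unfolding collinear_alt
  proof (rule exI[of _ "p 1"], rule exI[of _ "vector [-c, b] :: real^2"], rule ballI)
    fix x assume "x \<in> {p 1, p 2, p 3}"
    then have hx: "a + b * x $ 1 + c * x $ 2 = 0" using h by auto
    have h1: "a + b * p 1 $ 1 + c * p 1 $ 2 = 0" using h by auto
    define d1 where "d1 = x $ 1 - p 1 $ 1"
    define d2 where "d2 = x $ 2 - p 1 $ 2"
    have d: "b * d1 + c * d2 = 0" using hx h1 unfolding d1_def d2_def by (simp add: algebra_simps)
    define t where "t = (if b \<noteq> 0 then d2 / b else - d1 / c)"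
    have "x = p 1 + t *\<^sub>R (vector [-c, b] :: real^2)"
    proof (cases "b = 0")
      case True
      then have "c \<noteq> 0" using False by simp
      then show ?thesis using d True unfolding t_def d1_def d2_def
        by (simp add: vec_eq_iff forall_2 field_simps)
    next
      case b: False
      have "d1 = - c * d2 / b" using d b by (simp add: field_simps)
      then show ?thesis using b unfolding t_def
        by (simp add: vec_eq_iff forall_2 field_simps d1_def d2_def)
    qed
    then show "\<exists>t. x = p 1 + t *\<^sub>R (vector [-c, b] :: real^2)" by blast
  qed
  then show ?thesis using nc by blast
qed

lemma kernel:
  fixes u :: "real^15"
  assumes R: "R > 0" and nv1: "nv $ 1 = 0" and nv2: "nv $ 2 \<noteq> 0"
    and inj: "inj_on eta1 {1..3}" and e2: "eta2 1 \<noteq> eta2 2"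
    and nc: "\<not> collinear {xi 1, xi 2, xi 3}"
    and F: "collocmap R lam (\<lambda>_. nv) (\<lambda>k. vector [eta1 k * R, 0])
             (\<lambda>k. vector [eta2 k * R, 0]) (vector [eta3 * R, 0]) (\<lambda>k. R *\<^sub>R xi k) u = 0"
  shows "(\<forall>j\<in>{1..6}. \<forall>i\<in>{1..2}. cc u j i = 0) \<and> (\<forall>j\<in>{1..3}. dd u j = 0)"
proof -
  note ev = phi_def dphix_def dphiy_def dphi_def lapphi_def comp_def Let_def
  define sg where "sg = nv $ 2"
  have Rn: "R \<noteq> 0" using R by simp
  note ev = ev Rn nv1 sg_def[symmetric]
  note rw = F Rn scl nv1 sg_def[symmetric]
  have E1: "cc u 1 i + eta1 k * cc u 2 i + (eta1 k)^2 * cc u 4 i = 0" if "k \<in> {1..3}" "i \<in> {1..2}" for k i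
    using row1[OF that, of R lam "\<lambda>_. nv" "(\<lambda>k. vector [eta1 k * R, 0])" "(\<lambda>k. vector [eta2 k * R, 0])" "(vector [eta3 * R, 0])" "(\<lambda>k. R *\<^sub>R xi k)" u]
    by (simp only: s6 rw) (simp add: ev algebra_simps)
  have E2a: "sg * (cc u 3 1 + eta2 k * cc u 6 1 + cc u 2 2 + 2 * eta2 k * cc u 4 2) = 0" if "k \<in> {1..2}" for k
    using row2[OF that, of 1 R lam "\<lambda>_. nv" "(\<lambda>k. vector [eta1 k * R, 0])" "(\<lambda>k. vector [eta2 k * R, 0])" "(vector [eta3 * R, 0])" "(\<lambda>k. R *\<^sub>R xi k)" u]
    by (simp only: s6 s3 s2 rw) (simp add: ev algebra_simps)
  have E2b: "sg * (2 * cc u 3 2 + 2 * eta2 k * cc u 6 2 - dd u 1 - eta2 k * dd u 2) = 0" if "k \<in> {1..2}" for k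
    using row2[OF that, of 2 R lam "\<lambda>_. nv" "(\<lambda>k. vector [eta1 k * R, 0])" "(\<lambda>k. vector [eta2 k * R, 0])" "(vector [eta3 * R, 0])" "(\<lambda>k. R *\<^sub>R xi k)" u]
    by (simp only: s6 s3 s2 rw) (simp add: ev algebra_simps)
  have E3a: "2 * cc u 4 1 + 2 * cc u 5 1 - lam * (cc u 1 1 + eta3 * cc u 2 1 + eta3^2 * cc u 4 1) - dd u 2 = 0"
    using row3[of 1 R lam "\<lambda>_. nv" "(\<lambda>k. vector [eta1 k * R, 0])" "(\<lambda>k. vector [eta2 k * R, 0])" "(vector [eta3 * R, 0])" "(\<lambda>k. R *\<^sub>R xi k)" u]
    by (simp only: s6 s3 s2 rw) (simp add: ev algebra_simps)
  have E3b: "2 * cc u 4 2 + 2 * cc u 5 2 - lam * (cc u 1 2 + eta3 * cc u 2 2 + eta3^2 * cc u 4 2) - dd u 3 = 0"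
    using row3[of 2 R lam "\<lambda>_. nv" "(\<lambda>k. vector [eta1 k * R, 0])" "(\<lambda>k. vector [eta2 k * R, 0])" "(vector [eta3 * R, 0])" "(\<lambda>k. R *\<^sub>R xi k)" u]
    by (simp only: s6 s3 s2 rw) (simp add: ev algebra_simps)
  have E4: "cc u 2 1 + 2 * xi k $ 1 * cc u 4 1 + xi k $ 2 * cc u 6 1 + cc u 3 2 + 2 * xi k $ 2 * cc u 5 2 + xi k $ 1 * cc u 6 2 = 0" if "k \<in> {1..3}" for k
    using row4[OF that, of R lam "\<lambda>_. nv" "(\<lambda>k. vector [eta1 k * R, 0])" "(\<lambda>k. vector [eta2 k * R, 0])" "(vector [eta3 * R, 0])" "(\<lambda>k. R *\<^sub>R xi k)" u]
    by (simp only: s6 rw) (simp add: ev algebra_simps)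
  have sg0: "sg \<noteq> 0" using nv2 sg_def by simp
  have d12: "eta1 1 \<noteq> eta1 2" and d13: "eta1 1 \<noteq> eta1 3" and d23: "eta1 2 \<noteq> eta1 3"
    using inj_on_contraD[OF inj, of 1 2] inj_on_contraD[OF inj, of 1 3] inj_on_contraD[OF inj, of 2 3] by auto
  have C124: "cc u 1 i = 0 \<and> cc u 2 i = 0 \<and> cc u 4 i = 0" if "i \<in> {1..2}" for i
    using vdm[OF d12 d13 d23 E1[of 1 i] E1[of 2 i] E1[of 3 i]] that by simp
  have "\<forall>k\<in>{1,2,3}. cc u 3 2 + cc u 6 2 * xi k $ 1 + (cc u 6 1 + 2 * cc u 5 2) * xi k $ 2 = 0"
  proof
    fix k :: nat assume "k \<in> {1,2,3}"
    then have "k \<in> {1..3}" by auto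
    from E4[OF this] show "cc u 3 2 + cc u 6 2 * xi k $ 1 + (cc u 6 1 + 2 * cc u 5 2) * xi k $ 2 = 0"
      using C124[of 1] by (simp add: algebra_simps)
  qed
  then have P: "cc u 3 2 = 0 \<and> cc u 6 2 = 0 \<and> cc u 6 1 + 2 * cc u 5 2 = 0"
    using pl3[of xi "cc u 3 2" "cc u 6 2" "cc u 6 1 + 2 * cc u 5 2", OF nc] by blast
  have T1: "cc u 3 1 + eta2 k * cc u 6 1 = 0" if "k \<in> {1..2}" for k
    using E2a[OF that] sg0 C124[of 2] by simp
  have L1: "cc u 3 1 = 0 \<and> cc u 6 1 = 0"
    using lin2[OF e2 T1[of 1] T1[of 2]] by simp
  have c52: "cc u 5 2 = 0" using P L1 by simp
  have T2: "- dd u 1 + eta2 k * (- dd u 2) = 0" if "k \<in> {1..2}" for k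
    using E2b[OF that] sg0 P by simp
  have L2: "dd u 1 = 0 \<and> dd u 2 = 0"
    using lin2[OF e2 T2[of 1] T2[of 2]] by simp
  have c51: "cc u 5 1 = 0" using E3a C124[of 1] L2 by simp
  have d3: "dd u 3 = 0" using E3b C124[of 2] c52 by simp
  have s6e: "{1..6::nat} = {1,2,3,4,5,6}" and s3e: "{1..3::nat} = {1,2,3}" and s2e: "{1..2::nat} = {1,2}" by auto
  show ?thesis unfolding s6e s3e s2e
    using C124[of 1] C124[of 2] P L1 c52 L2 c51 d3 by auto
qed


lemma colloc_add: "collocmap R lam n q1 q2 q3 q4 (x + y) = collocmap R lam n q1 q2 q3 q4 x + collocmap R lam n q1 q2 q3 q4 y"
  unfolding collocmap_def
  by (simp add: vec_eq_iff Let_def cc_def dd_def split_beta sum.distrib[symmetric] algebra_simps)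

lemma colloc_scale: "collocmap R lam n q1 q2 q3 q4 (c *\<^sub>R x) = c *\<^sub>R collocmap R lam n q1 q2 q3 q4 x"
  unfolding collocmap_def
  by (simp add: vec_eq_iff Let_def cc_def dd_def split_beta sum_distrib_left algebra_simps)

lemma colloc_linear: "linear (collocmap R lam n q1 q2 q3 q4)"
  by (rule linearI) (simp_all add: colloc_add colloc_scale)

lemma colloc_R: "collocmap R lam (\<lambda>_. nv) q1 q2 q3 q4 = collocmap 1 lam (\<lambda>_. nv) (\<lambda>k. (1/R) *\<^sub>R q1 k) (\<lambda>k. (1/R) *\<^sub>R q2 k) ((1/R) *\<^sub>R q3) (\<lambda>k. (1/R) *\<^sub>R q4 k)"
  unfolding collocmap_def by (simp only: Let_def div_by_1 scaleR_one)



lemma idx_surj: "\<exists>m<15. (r::15) = idx m"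
proof (induct r rule: bit1_induct)
  case (of_int z)
  then show ?case unfolding idx_def
    by (intro exI[of _ "nat z"]) auto
qed

lemma zero_from_cc:
  assumes "(\<forall>j\<in>{1..6}. \<forall>i\<in>{1..2}. cc u j i = 0) \<and> (\<forall>j\<in>{1..3}. dd u j = 0)"
  shows "u = 0"
proof -
  have "u $ idx m = 0" if "m < 15" for m
  proof (cases "m < 12")
    case True
    have "cc u (m div 2 + 1) (m mod 2 + 1) = 0" using assms True by auto
    moreover have "2 * (m div 2 + 1 - 1) + (m mod 2 + 1 - 1) = m" by simp
    ultimately show ?thesis unfolding cc_def by simp
  next
    case False
    have "m - 11 \<in> {1..3}" using False that by auto
    then have "dd u (m - 11) = 0" using assms by blast
    moreover have "12 + (m - 11 - 1) = m" using False by simp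
    ultimately show ?thesis unfolding dd_def by simp
  qed
  then show ?thesis using idx_surj by (metis vec_eq_iff zero_index)
qed


theorem mainTheorem3:
  fixes lam R :: real and nv :: "real^2"
    and eta1 eta2 :: "nat \<Rightarrow> real" and eta3 :: real and xi :: "nat \<Rightarrow> real^2"
  assumes "lam \<ge> 0" and "R > 0"
    and "nv = vector [0, 1] \<or> nv = vector [0, -1]"
    and "inj_on eta1 {1..3}"
    and "eta2 1 \<noteq> eta2 2"
    and "\<not> collinear {xi 1, xi 2, xi 3}"
    and "\<forall>k\<in>{1..3}. vector [eta1 k * R, 0] \<in> ball (0::real^2) R"
    and "\<forall>k\<in>{1..2}. vector [eta2 k * R, 0] \<in> ball (0::real^2) R"
    and "vector [eta3 * R, 0] \<in> ball (0::real^2) R"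
    and "\<forall>k\<in>{1..3}. R *\<^sub>R xi k \<in> ball (0::real^2) R"
  shows "(\<forall>R'>0. collocM R' lam (\<lambda>_. nv) (\<lambda>k. vector [eta1 k * R', 0])
             (\<lambda>k. vector [eta2 k * R', 0]) (vector [eta3 * R', 0]) (\<lambda>k. R' *\<^sub>R xi k)
          = collocM R lam (\<lambda>_. nv) (\<lambda>k. vector [eta1 k * R, 0])
             (\<lambda>k. vector [eta2 k * R, 0]) (vector [eta3 * R, 0]) (\<lambda>k. R *\<^sub>R xi k))
       \<and> invertible (collocM R lam (\<lambda>_. nv) (\<lambda>k. vector [eta1 k * R, 0])
             (\<lambda>k. vector [eta2 k * R, 0]) (vector [eta3 * R, 0]) (\<lambda>k. R *\<^sub>R xi k))"
proof -
  have red: "collocmap R' lam (\<lambda>_. nv) (\<lambda>k. vector [eta1 k * R', 0])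
             (\<lambda>k. vector [eta2 k * R', 0]) (vector [eta3 * R', 0]) (\<lambda>k. R' *\<^sub>R xi k)
     = collocmap 1 lam (\<lambda>_. nv) (\<lambda>k. vector [eta1 k, 0])
             (\<lambda>k. vector [eta2 k, 0]) (vector [eta3, 0]) xi" if "R' > 0" for R'
  proof -
    have "R' \<noteq> 0" using that by simp
    then show ?thesis by (subst colloc_R) (simp add: scl)
  qed
  have P1: "\<forall>R'>0. collocM R' lam (\<lambda>_. nv) (\<lambda>k. vector [eta1 k * R', 0])
             (\<lambda>k. vector [eta2 k * R', 0]) (vector [eta3 * R', 0]) (\<lambda>k. R' *\<^sub>R xi k)
          = collocM R lam (\<lambda>_. nv) (\<lambda>k. vector [eta1 k * R, 0])
             (\<lambda>k. vector [eta2 k * R, 0]) (vector [eta3 * R, 0]) (\<lambda>k. R *\<^sub>R xi k)"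
    unfolding collocM_def using red assms(2) by simp
  have nv1: "nv $ 1 = 0" and nv2: "nv $ 2 \<noteq> 0" using assms(3) by auto
  let ?f = "collocmap R lam (\<lambda>_. nv) (\<lambda>k. vector [eta1 k * R, 0])
             (\<lambda>k. vector [eta2 k * R, 0]) (vector [eta3 * R, 0]) (\<lambda>k. R *\<^sub>R xi k)"
  have bl: "bounded_linear ?f" using colloc_linear linear_conv_bounded_linear by blast
  have mv: "matrix ?f *v x = ?f x" for x
    using matrix_vector_mul(3)[OF bl] by metis
  have "\<forall>x. matrix ?f *v x = 0 \<longrightarrow> x = 0"
  proof (intro allI impI)
    fix x assume "matrix ?f *v x = 0"
    then have "?f x = 0" using mv by simp
    from kernel[OF assms(2) nv1 nv2 assms(4) assms(5) assms(6) this]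
    show "x = 0" by (rule zero_from_cc)
  qed
  then have "invertible (matrix ?f)"
    unfolding invertible_left_inverse matrix_left_invertible_ker .
  then show ?thesis using P1 unfolding collocM_def by simp
qed

end
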